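(* Let $n\ge 3$ and let $G_n$ be the directed graph whose vertex set is $S_n$ (permutations in one-line notation $[u(1),\dots,u(n)]$), with a directed edge $\mathbf{u}\to\mathbf{v}$ if and only if $\max_{i\in\{1,\dots,n\}}\bigl(v^{-1}(i)-u^{-1}(i)\bigr)=1$. If $D\subseteq S_n$ is a dominating set of $G_n$, i.e., every vertex $\mathbf{u}\notin D$ has an edge $\mathbf{u}\to\mathbf{v}$ to some $\mathbf{v}\in D$, then $$|D|\ \ge\ \frac{n!}{\frac{3}{4}\cdot 2^{n-1}}.$$
   Context: For a permutation $\mathbf{u}=[u(1),\dots,u(n)]$ in one-line notation, $u^{-1}(i)$ denotes the position of $i$ in the sequence. The quantity $\max_i(v^{-1}(i)-u^{-1}(i))$ is the rewriting cost of changing state $\mathbf{u}$ to state $\mathbf{v}$ via minimal-push-up operations. *)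

theory Defs
  imports Complex_Main "HOL-Combinatorics.Permutations"
begin

text \<open>A permutation u in one-line notation [u(1),...,u(n)] is a bijection of {1..n};
  u(k) is the entry at position k, and inv u i is the position of the value i.\<close>

definition Sn :: "nat \<Rightarrow> (nat \<Rightarrow> nat) set" where
  "Sn n = {u. u permutes {1..n}}"

definition rw_cost :: "nat \<Rightarrow> (nat \<Rightarrow> nat) \<Rightarrow> (nat \<Rightarrow> nat) \<Rightarrow> int" where
  "rw_cost n u v = Max ((\<lambda>i. int (inv v i) - int (inv u i)) ` {1..n})"

definition Gn_edge :: "nat \<Rightarrow> (nat \<Rightarrow> nat) \<Rightarrow> (nat \<Rightarrow> nat) \<Rightarrow> bool" where
  "Gn_edge n u v \<longleftrightarrow> u \<in> Sn n \<and> v \<in> Sn n \<and> rw_cost n u v = 1"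

definition dominating :: "nat \<Rightarrow> (nat \<Rightarrow> nat) set \<Rightarrow> bool" where
  "dominating n D \<longleftrightarrow> D \<subseteq> Sn n \<and> (\<forall>u \<in> Sn n - D. \<exists>v \<in> D. Gn_edge n u v)"

end

theory Submission
  imports Defs
begin

definition M :: "nat \<Rightarrow> (nat\<Rightarrow>nat) \<Rightarrow> (nat\<Rightarrow>nat) set" where
  "M n v = {u \<in> Sn n. \<forall>k\<in>{1..n}. inv v (u k) \<le> k + 1}"

definition key :: "nat \<Rightarrow> (nat\<Rightarrow>nat) \<Rightarrow> (nat \<Rightarrow> nat)" where
  "key n u = (\<lambda>k. if k \<in> {1..n-3} then u k else 0)"

lemma inv_range:
  assumes "v permutes {1..n}" "x \<in> {1..n}" shows "inv v x \<in> {1..n}"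
  using permutes_in_image[OF permutes_inv[OF assms(1)]] assms(2) by blast

lemma cover:
  assumes "dominating n D" "u \<in> Sn n" shows "\<exists>v\<in>D. u \<in> M n v"
proof (cases "u \<in> D")
  case True
  have "u permutes {1..n}" using assms(2) by (simp add: Sn_def)
  then have "u \<in> M n u" using assms(2) by (simp add: M_def permutes_inverses)
  then show ?thesis using True by blast
next
  case False
  then obtain v where v: "v \<in> D" "Gn_edge n u v" using assms unfolding dominating_def by blast
  then have c: "rw_cost n u v = 1" and uS: "u \<in> Sn n" and vS: "v \<in> Sn n" by (auto simp: Gn_edge_def)
  have up: "u permutes {1..n}" using uS by (simp add: Sn_def)
  have "inv v (u k) \<le> k + 1" if k: "k \<in> {1..n}" for k
  proof -
    have "int (inv v (u k)) - int (inv u (u k)) \<le> rw_cost n u v"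
      unfolding rw_cost_def
    proof (rule Max_ge)
      have "u k \<in> {1..n}" using permutes_in_image[OF up] k by blast
      then show "int (inv v (u k)) - int (inv u (u k)) \<in> (\<lambda>i. int (inv v i) - int (inv u i)) ` {1..n}" by blast
    qed simp
    then show ?thesis using c up by (simp add: permutes_inverses)
  qed
  then have "u \<in> M n v" using uS by (simp add: M_def)
  then show ?thesis using v by blast
qed

lemma crit:
  assumes n: "n \<ge> 3" and vS: "v \<in> Sn n" and uM: "u \<in> M n v" and s: "\<sigma> permutes {n-2..n}"
  shows "u \<circ> \<sigma> \<in> Sn n" "key n (u \<circ> \<sigma>) = key n u"
    "u \<circ> \<sigma> \<in> M n v \<longleftrightarrow> u (\<sigma> (n-2)) \<noteq> v n"
proof -
  have up: "u permutes {1..n}" using uM by (simp add: M_def Sn_def)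
  have vp: "v permutes {1..n}" using vS by (simp add: Sn_def)
  have s1: "\<sigma> permutes {1..n}" by (rule permutes_subset[OF s]) (use n in auto)
  show S: "u \<circ> \<sigma> \<in> Sn n" using permutes_compose[OF s1 up] by (simp add: Sn_def)
  show "key n (u \<circ> \<sigma>) = key n u"
  proof -
    have "\<sigma> k = k" if "k \<in> {1..n-3}" for k using that n by (intro permutes_not_in[OF s]) auto
    then show ?thesis unfolding key_def by (auto simp: fun_eq_iff)
  qed
  have um: "\<And>k. k \<in> {1..n} \<Longrightarrow> inv v (u k) \<le> k + 1" using uM by (simp add: M_def)
  show "u \<circ> \<sigma> \<in> M n v \<longleftrightarrow> u (\<sigma> (n-2)) \<noteq> v n"
  proof
    assume a: "u \<circ> \<sigma> \<in> M n v"
    show "u (\<sigma> (n-2)) \<noteq> v n"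
    proof
      assume b: "u (\<sigma> (n-2)) = v n"
      have "inv v ((u \<circ> \<sigma>) (n-2)) \<le> n - 2 + 1" using a n by (simp add: M_def)
      then show False using b n by (simp add: permutes_inverses[OF vp])
    qed
  next
    assume b: "u (\<sigma> (n-2)) \<noteq> v n"
    have "inv v (u (\<sigma> k)) \<le> k + 1" if k: "k \<in> {1..n}" for k
    proof (cases "k \<in> {n-2..n}")
      case True
      then have "\<sigma> k \<in> {n-2..n}" using permutes_in_image[OF s] by blast
      then have sk: "\<sigma> k \<in> {1..n}" using n by auto
      then have x: "u (\<sigma> k) \<in> {1..n}" using permutes_in_image[OF up] by blast
      then have le: "inv v (u (\<sigma> k)) \<le> n" using inv_range[OF vp] by auto
      show ?thesis
      proof (cases "k = n - 2")
        case True
        have "inv v (u (\<sigma> k)) \<noteq> n"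
        proof
          assume "inv v (u (\<sigma> k)) = n"
          then have "v (inv v (u (\<sigma> k))) = v n" by simp
          then show False using b True by (simp add: permutes_inverses[OF vp])
        qed
        then show ?thesis using le True n by linarith
      next
        case False
        then show ?thesis using le \<open>k \<in> {n-2..n}\<close> by auto
      qed
    next
      case False
      then show ?thesis using um[OF k] permutes_not_in[OF s False] by simp
    qed
    then show "u \<circ> \<sigma> \<in> M n v" using S by (simp add: M_def)
  qed
qed

lemma core:
  assumes n: "n \<ge> 3" and vS: "v \<in> Sn n" and uM: "u \<in> M n v"
  shows "card {w \<in> M n v. key n w = key n u} \<ge> 4"
    "\<exists>w\<in>Sn n. key n w = key n u \<and> w \<notin> M n v"
proof -
  define A B C where "A = n - 2" and "B = n - 1" and "C = n"
  define c where "c = v n"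
  have up: "u permutes {1..n}" using uM by (simp add: M_def Sn_def)
  have vp: "v permutes {1..n}" using vS by (simp add: Sn_def)
  have uA: "u A \<noteq> c"
  proof
    assume a: "u A = c"
    have "inv v (u A) \<le> A + 1" using uM n unfolding M_def A_def by auto
    then show False using a n by (simp add: c_def A_def permutes_inverses[OF vp])
  qed
  have "c \<in> {1..n}" unfolding c_def using permutes_in_image[OF vp] n by auto
  then obtain p where p: "p \<in> {1..n}" "u p = c" using permutes_image[OF up] by (metis imageE)
  have "inv v (u p) \<le> p + 1" using uM p(1) by (simp add: M_def)
  then have "n \<le> p + 1" using p(2) by (simp add: c_def permutes_inverses[OF vp])
  then have pBC: "p = B \<or> p = C" using p(1) by (auto simp: B_def C_def)
  define \<sigma>0 where "\<sigma>0 = (if u C = c then id else transpose B C)"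
  have s0: "\<sigma>0 permutes {n-2..n}" unfolding \<sigma>0_def
    using permutes_id permutes_swap_id[of B "{n-2..n}" C] n by (auto simp: B_def C_def)
  have s0A: "\<sigma>0 A = A" using n by (simp add: \<sigma>0_def A_def B_def C_def)
  define u0 where "u0 = u \<circ> \<sigma>0"
  have u0M: "u0 \<in> M n v" using crit(3)[OF n vS uM s0] uA s0A by (simp add: u0_def A_def c_def)
  have u0k: "key n u0 = key n u" using crit(2)[OF n vS uM s0] by (simp add: u0_def)
  have u0C: "u0 C = c" using pBC p(2) n by (auto simp: u0_def \<sigma>0_def B_def C_def)
  have u0A: "u0 A = u A" using s0A by (simp add: u0_def)
  have u0p: "u0 permutes {1..n}" using u0M by (simp add: M_def Sn_def)
  have ABC: "A \<noteq> B" "B \<noteq> C" "A \<noteq> C" using n by (auto simp: A_def B_def C_def)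
  have d: "u0 A \<noteq> u0 B" "u0 B \<noteq> u0 C" "u0 A \<noteq> u0 C"
    using ABC permutes_inj[OF u0p] by (auto dest: injD)
  have pAB: "transpose A B permutes {n-2..n}" by (rule permutes_swap_id) (use n in \<open>auto simp: A_def B_def\<close>)
  have pBC': "transpose B C permutes {n-2..n}" by (rule permutes_swap_id) (use n in \<open>auto simp: C_def B_def\<close>)
  have pAC: "transpose A C permutes {n-2..n}" by (rule permutes_swap_id) (use n in \<open>auto simp: A_def C_def\<close>)
  have pABC: "transpose A B \<circ> transpose B C permutes {n-2..n}" using permutes_compose[OF pBC' pAB] .
  define e1 e2 e3 e4 where "e1 = u0" and "e2 = u0 \<circ> transpose A B" and "e3 = u0 \<circ> transpose B C"
    and "e4 = u0 \<circ> (transpose A B \<circ> transpose B C)"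
  have memb: "w \<in> {w \<in> M n v. key n w = key n u}" if "\<sigma> permutes {n-2..n}" "u0 (\<sigma> A) \<noteq> c" "w = u0 \<circ> \<sigma>" for w \<sigma>
    using crit[OF n vS u0M that(1)] that(2,3) u0k by (simp add: A_def c_def)
  have "e1 \<in> {w \<in> M n v. key n w = key n u}" using u0M u0k by (simp add: e1_def)
  moreover have "e2 \<in> {w \<in> M n v. key n w = key n u}" using memb[OF pAB _ e2_def] d u0C by simp
  moreover have "e3 \<in> {w \<in> M n v. key n w = key n u}" using memb[OF pBC' _ e3_def] d u0C ABC by simp
  moreover have "e4 \<in> {w \<in> M n v. key n w = key n u}" using memb[OF pABC _ e4_def] d u0C ABC by simp
  ultimately have sub: "{e1,e2,e3,e4} \<subseteq> {w \<in> M n v. key n w = key n u}" by blast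
  have vals: "e1 A = u0 A" "e1 B = u0 B" "e2 A = u0 B" "e2 B = u0 A" "e3 A = u0 A" "e3 B = u0 C"
    "e4 A = u0 B" "e4 B = u0 C"
    using ABC by (auto simp: e1_def e2_def e3_def e4_def transpose_def)
  have "e1 \<noteq> e2" "e1 \<noteq> e3" "e1 \<noteq> e4" "e2 \<noteq> e3" "e2 \<noteq> e4" "e3 \<noteq> e4"
    using vals d by (metis)+
  then have "card {e1,e2,e3,e4} = 4" by simp
  moreover have "finite {w \<in> M n v. key n w = key n u}"
  proof -
    have "finite (Sn n)" unfolding Sn_def by (rule finite_permutations) simp
    then show ?thesis by (rule rev_finite_subset) (auto simp: M_def)
  qed
  ultimately show "card {w \<in> M n v. key n w = key n u} \<ge> 4" using sub by (metis card_mono)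
  have "u0 \<circ> transpose A C \<notin> M n v" using crit(3)[OF n vS u0M pAC] u0C
    by (simp add: A_def c_def C_def)
  moreover have "u0 \<circ> transpose A C \<in> Sn n" "key n (u0 \<circ> transpose A C) = key n u"
    using crit(1,2)[OF n vS u0M pAC] u0k by auto
  ultimately show "\<exists>w\<in>Sn n. key n w = key n u \<and> w \<notin> M n v" by blast
qed

lemma block_le6:
  assumes n: "n \<ge> 3" and uS: "u \<in> Sn n"
  shows "card {w \<in> Sn n. key n w = key n u} \<le> 6"
proof -
  have up: "u permutes {1..n}" using uS by (simp add: Sn_def)
  have sub: "{w \<in> Sn n. key n w = key n u} \<subseteq> (\<lambda>\<sigma>. u \<circ> \<sigma>) ` {\<sigma>. \<sigma> permutes {n-2..n}}"
  proof
    fix w assume "w \<in> {w \<in> Sn n. key n w = key n u}"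
    then have wp: "w permutes {1..n}" and kw: "key n w = key n u" by (auto simp: Sn_def)
    have s1: "inv u \<circ> w permutes {1..n}" using permutes_compose[OF wp permutes_inv[OF up]] .
    have "inv u \<circ> w permutes {n-2..n}"
    proof (rule permutes_superset[OF s1])
      fix x assume x: "x \<in> {1..n} - {n-2..n}"
      then have "x \<in> {1..n-3}" using n by auto
      then have "w x = u x" using kw unfolding key_def by (metis (no_types, lifting))
      then show "(inv u \<circ> w) x = x" by (simp add: permutes_inverses[OF up])
    qed
    moreover have "w = u \<circ> (inv u \<circ> w)" by (simp add: fun_eq_iff permutes_inverses[OF up])
    ultimately show "w \<in> (\<lambda>\<sigma>. u \<circ> \<sigma>) ` {\<sigma>. \<sigma> permutes {n-2..n}}" by blast
  qed
  have fin: "finite {\<sigma>. \<sigma> permutes {n-2..n}}" by (rule finite_permutations) simp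
  have c3: "card {n-2..n} = 3" using n by simp
  have "card {\<sigma>. \<sigma> permutes {n-2..n}} = 6"
    using card_permutations[OF c3] by (simp add: fact_numeral)
  then show ?thesis using card_mono[OF finite_imageI[OF fin] sub] card_image_le[OF fin, of "\<lambda>\<sigma>. u \<circ> \<sigma>"]
    by linarith
qed


lemma finite_Sn: "finite (Sn n)"
  unfolding Sn_def by (rule finite_permutations) simp

lemma finite_M: "finite (M n v)"
  using finite_Sn by (rule rev_finite_subset) (auto simp: M_def)

definition PS :: "nat \<Rightarrow> (nat\<Rightarrow>nat) \<Rightarrow> nat \<Rightarrow> (nat\<Rightarrow>nat) \<Rightarrow> (nat\<Rightarrow>nat) set" where
  "PS n v L w = {u \<in> M n v. \<forall>k\<in>{1..L}. u k = w k}"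

lemma M_perm: "u \<in> M n v \<Longrightarrow> u permutes {1..n}"
  by (simp add: M_def Sn_def)

lemma prefix_base:
  assumes n: "n \<ge> 1"
  shows "card (PS n v (n-1) w) \<le> 1"
proof -
  have "a = b" if a: "a \<in> PS n v (n-1) w" and b: "b \<in> PS n v (n-1) w" for a b
  proof -
    have ap: "a permutes {1..n}" and bp: "b permutes {1..n}" using a b M_perm by (auto simp: PS_def)
    have ag: "\<And>k. k \<in> {1..n-1} \<Longrightarrow> a k = b k" using a b by (auto simp: PS_def)
    have "a x = b x" for x
    proof (cases "x \<in> {1..n}")
      case False
      then show ?thesis using permutes_not_in[OF ap False] permutes_not_in[OF bp False] by simp
    next
      case True
      show ?thesis
      proof (cases "x = n")
        case False
        then show ?thesis using True by (intro ag) auto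
      next
        case xn: True
        have "a n \<in> {1..n}" using permutes_in_image[OF ap] n by auto
        then obtain y where y: "y \<in> {1..n}" "b y = a n" using permutes_image[OF bp] by (metis imageE)
        have "y = n"
        proof (rule ccontr)
          assume "y \<noteq> n"
          then have "a y = b y" using y ag by auto
          then have "a y = a n" using y by simp
          then show False using \<open>y \<noteq> n\<close> permutes_inj[OF ap] by (auto dest: injD)
        qed
        then show ?thesis using y xn by simp
      qed
    qed
    then show "a = b" by auto
  qed
  moreover have "finite (PS n v (n-1) w)" using finite_M by (rule rev_finite_subset) (auto simp: PS_def)
  ultimately show ?thesis using card_le_Suc0_iff_eq[of "PS n v (n-1) w"] by simp
qed


lemma prefix_step:
  assumes vS: "v \<in> Sn n" and L: "L + 2 \<le> n"
    and IH: "\<And>w. card (PS n v (Suc L) w) \<le> K"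
  shows "card (PS n v L w) \<le> 2 * K"
proof (cases "PS n v L w = {}")
  case True then show ?thesis by simp
next
  case False
  then obtain u0 where u0: "u0 \<in> PS n v L w" by blast
  have vp: "v permutes {1..n}" using vS by (simp add: Sn_def)
  have u0p: "u0 permutes {1..n}" using u0 unfolding PS_def by (blast intro: M_perm)
  have wim: "w ` {1..L} = u0 ` {1..L}" using u0 by (auto simp: PS_def)
  have cw: "card (w ` {1..L}) = L"
  proof -
    have "inj_on u0 {1..L}" using permutes_inj[OF u0p] by (rule inj_on_subset) simp
    then show ?thesis using wim card_image by fastforce
  qed
  define V where "V = v ` {1..L+2} - w ` {1..L}"
  have sub1: "w ` {1..L} \<subseteq> v ` {1..L+2}"
  proof
    fix x assume "x \<in> w ` {1..L}"
    then obtain k where k: "k \<in> {1..L}" "x = u0 k" using wim by auto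
    have kn: "k \<in> {1..n}" using k L by auto
    have "inv v (u0 k) \<le> k + 1" using u0 kn unfolding PS_def M_def by blast
    moreover have "u0 k \<in> {1..n}" using permutes_in_image[OF u0p] kn by blast
    then have "inv v (u0 k) \<in> {1..n}" using inv_range[OF vp] by blast
    ultimately have "inv v (u0 k) \<in> {1..L+2}" using k by auto
    moreover have "x = v (inv v (u0 k))" using k by (simp add: permutes_inverses[OF vp])
    ultimately show "x \<in> v ` {1..L+2}" by blast
  qed
  have cV: "card V \<le> 2"
  proof -
    have "card V = card (v ` {1..L+2}) - card (w ` {1..L})"
      unfolding V_def by (rule card_Diff_subset) (use sub1 in auto)
    moreover have "card (v ` {1..L+2}) \<le> L + 2" using card_image_le[of "{1..L+2}" v] by simp
    ultimately show ?thesis using cw by linarith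
  qed
  have finV: "finite V" unfolding V_def by simp
  have sub: "PS n v L w \<subseteq> (\<Union>x\<in>V. PS n v (Suc L) (w(Suc L := x)))"
  proof
    fix u assume u: "u \<in> PS n v L w"
    have up: "u permutes {1..n}" using u unfolding PS_def by (blast intro: M_perm)
    have kn: "Suc L \<in> {1..n}" using L by auto
    have "inv v (u (Suc L)) \<le> Suc L + 1" using u kn unfolding PS_def M_def by blast
    moreover have "u (Suc L) \<in> {1..n}" using permutes_in_image[OF up] kn by blast
    then have "inv v (u (Suc L)) \<in> {1..n}" using inv_range[OF vp] by blast
    ultimately have "inv v (u (Suc L)) \<in> {1..L+2}" by auto
    moreover have "u (Suc L) = v (inv v (u (Suc L)))" by (simp add: permutes_inverses[OF vp])
    ultimately have x1: "u (Suc L) \<in> v ` {1..L+2}" by blast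
    have x2: "u (Suc L) \<notin> w ` {1..L}"
    proof
      assume "u (Suc L) \<in> w ` {1..L}"
      then obtain y where y: "y \<in> {1..L}" "u (Suc L) = w y" by auto
      then have "u (Suc L) = u y" using u by (auto simp: PS_def)
      then have "Suc L = y" by (rule injD[OF permutes_inj[OF up]])
      then show False using y by simp
    qed
    have "u \<in> PS n v (Suc L) (w(Suc L := u (Suc L)))" using u by (auto simp: PS_def)
    then show "u \<in> (\<Union>x\<in>V. PS n v (Suc L) (w(Suc L := x)))" using x1 x2 unfolding V_def by blast
  qed
  have finU: "finite (\<Union>x\<in>V. PS n v (Suc L) (w(Suc L := x)))"
    by (intro finite_UN_I finV) (rule rev_finite_subset[OF finite_M], auto simp: PS_def)
  have "card (PS n v L w) \<le> card (\<Union>x\<in>V. PS n v (Suc L) (w(Suc L := x)))"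
    by (rule card_mono[OF finU sub])
  also have "\<dots> \<le> (\<Sum>x\<in>V. card (PS n v (Suc L) (w(Suc L := x))))" by (rule card_UN_le[OF finV])
  also have "\<dots> \<le> card V * K" using sum_bounded_above[of V "\<lambda>x. card (PS n v (Suc L) (w(Suc L := x)))" K] IH by simp
  also have "\<dots> \<le> 2 * K" using cV by simp
  finally show ?thesis .
qed


lemma prefix_count:
  assumes vS: "v \<in> Sn n" and n: "n \<ge> 1"
  shows "m \<le> n - 1 \<Longrightarrow> card (PS n v (n - 1 - m) w) \<le> 2 ^ m"
proof (induction m arbitrary: w)
  case 0
  then show ?case using prefix_base[OF n] by simp
next
  case (Suc m)
  define L where "L = n - 1 - Suc m"
  have e: "n - 1 - m = Suc L" using Suc.prems unfolding L_def by simp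
  have "card (PS n v L w) \<le> 2 * 2 ^ m"
    by (rule prefix_step[OF vS]) (use Suc e L_def in auto)
  then show ?case by (simp add: L_def)
qed

lemma M_card:
  assumes vS: "v \<in> Sn n" and n: "n \<ge> 1"
  shows "card (M n v) \<le> 2 ^ (n - 1)"
proof -
  have "PS n v 0 w = M n v" for w by (simp add: PS_def)
  then show ?thesis using prefix_count[OF vS n, of "n-1" id] by simp
qed


lemma block8:
  assumes n: "n \<ge> 3" and dom: "dominating n D" and uS: "u \<in> Sn n" and finD: "finite D"
  shows "(\<Sum>v\<in>D. card {w \<in> M n v. key n w = key n u}) \<ge> 8"
proof -
  have DS: "D \<subseteq> Sn n" using dom by (simp add: dominating_def)
  obtain v1 where v1: "v1 \<in> D" "u \<in> M n v1" using cover[OF dom uS] by blast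
  obtain w where w: "w \<in> Sn n" "key n w = key n u" "w \<notin> M n v1" using core(2)[OF n _ v1(2)] v1(1) DS by blast
  obtain v2 where v2: "v2 \<in> D" "w \<in> M n v2" using cover[OF dom w(1)] by blast
  have ne: "v1 \<noteq> v2" using v2 w(3) by auto
  have c1: "card {x \<in> M n v1. key n x = key n u} \<ge> 4" using core(1)[OF n _ v1(2)] v1(1) DS by blast
  have c2: "card {x \<in> M n v2. key n x = key n u} \<ge> 4" using core(1)[OF n _ v2(2)] v2(1) DS w(2) by force
  have "(\<Sum>v\<in>{v1,v2}. card {x \<in> M n v. key n x = key n u}) \<le> (\<Sum>v\<in>D. card {x \<in> M n v. key n x = key n u})"
    by (rule sum_mono2[OF finD]) (use v1 v2 in auto)
  moreover have "(\<Sum>v\<in>{v1,v2}. card {x \<in> M n v. key n x = key n u}) \<ge> 8" using ne c1 c2 by simp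
  ultimately show ?thesis by linarith
qed

theorem theorem4:
  fixes n :: nat and D :: "(nat \<Rightarrow> nat) set"
  assumes "n \<ge> 3" and "dominating n D"
  shows "real (card D) \<ge> (fact n :: real) / (3 / 4 * 2 ^ (n - 1))"
proof -
  note n = assms(1) and dom = assms(2)
  have DS: "D \<subseteq> Sn n" using dom by (simp add: dominating_def)
  have finD: "finite D" using rev_finite_subset[OF finite_Sn DS] .
  define K where "K = key n ` Sn n"
  have finK: "finite K" unfolding K_def using finite_Sn by simp
  have cS: "card (Sn n) = fact n" unfolding Sn_def by (rule card_permutations) auto
  have "card (Sn n) = (\<Sum>\<kappa>\<in>K. card {u \<in> Sn n. key n u = \<kappa>})"
    unfolding K_def card_eq_sum using sum.image_gen[OF finite_Sn, where g="key n" and h="\<lambda>_. 1::nat"] by simp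
  also have "\<dots> \<le> (\<Sum>\<kappa>\<in>K. 6)"
  proof (rule sum_mono)
    fix \<kappa> assume "\<kappa> \<in> K"
    then obtain u where u: "u \<in> Sn n" "\<kappa> = key n u" unfolding K_def by blast
    show "card {u \<in> Sn n. key n u = \<kappa>} \<le> 6" using block_le6[OF n u(1)] u(2) by simp
  qed
  finally have f6: "fact n \<le> 6 * card K" using cS by simp
  have "(\<Sum>\<kappa>\<in>K. 8) \<le> (\<Sum>\<kappa>\<in>K. \<Sum>v\<in>D. card {w \<in> M n v. key n w = \<kappa>})"
  proof (rule sum_mono)
    fix \<kappa> assume "\<kappa> \<in> K"
    then obtain u where u: "u \<in> Sn n" "\<kappa> = key n u" unfolding K_def by blast
    show "8 \<le> (\<Sum>v\<in>D. card {w \<in> M n v. key n w = \<kappa>})" using block8[OF n dom u(1) finD] u(2) by simp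
  qed
  also have "\<dots> = (\<Sum>v\<in>D. \<Sum>\<kappa>\<in>K. card {w \<in> M n v. key n w = \<kappa>})" by (rule sum.swap)
  also have "\<dots> \<le> (\<Sum>v\<in>D. card (M n v))"
  proof (rule sum_mono)
    fix v assume v: "v \<in> D"
    have "(\<Sum>\<kappa>\<in>K. card {w \<in> M n v. key n w = \<kappa>}) = card (\<Union>\<kappa>\<in>K. {w \<in> M n v. key n w = \<kappa>})"
      by (rule card_UN_disjoint[symmetric]) (use finK finite_M in auto)
    also have "\<dots> \<le> card (M n v)" by (rule card_mono[OF finite_M]) auto
    finally show "(\<Sum>\<kappa>\<in>K. card {w \<in> M n v. key n w = \<kappa>}) \<le> card (M n v)" .
  qed
  also have "\<dots> \<le> (\<Sum>v\<in>D. 2 ^ (n - 1))"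
    by (rule sum_mono) (use M_card DS n in auto)
  finally have "8 * card K \<le> card D * 2 ^ (n - 1)" by simp
  then have nat_ineq: "4 * fact n \<le> 3 * (card D * 2 ^ (n - 1))" using f6 by linarith
  then have "real (4 * fact n) \<le> real (3 * (card D * 2 ^ (n - 1)))" by (simp only: of_nat_le_iff)
  then have ri: "4 * (fact n :: real) \<le> 3 * (real (card D) * 2 ^ (n - 1))" by simp
  have pos: "(0::real) < 3 / 4 * 2 ^ (n - 1)" by simp
  have "(fact n :: real) \<le> real (card D) * (3 / 4 * 2 ^ (n - 1))" using ri by simp
  then show ?thesis using pos by (simp add: pos_divide_le_eq)
qed

end
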